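(* Let $Q$ be a rational function with distinct poles $z_1,\dotsc,z_d$ ($d\ge1$) of orders $r_1,\dotsc,r_d$. Put $P=\prod_{i=1}^d(z-z_i)^{r_i}$ and $P_0=\prod_{i=1}^d(z-z_i)$, and for each $n\ge1$ write $Q^{(n)}=\frac{\alpha_nR_n}{PP_0^n}$ with $\alpha_n\in\mathbb{C}$ and $R_n\in\mathbb{C}[z]$ monic. Then $\frac{\log|n!/\alpha_n|}{n}\to0$ as $n\to\infty$. *)

theory Defs
  imports "HOL-Analysis.Analysis" "HOL-Computational_Algebra.Polynomial"
begin

text \<open>A rational function Q = N / D with N, D coprime complex polynomials, D nonzero.
  Its poles are the roots of D; the order of the pole z is the multiplicity of z as a root of D.\<close>

definition rat_fun :: "complex poly \<Rightarrow> complex poly \<Rightarrow> complex \<Rightarrow> complex" where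
  "rat_fun N D = (\<lambda>z. poly N z / poly D z)"

definition poles :: "complex poly \<Rightarrow> complex set" where
  "poles D = {z. poly D z = 0}"

definition pole_poly :: "complex poly \<Rightarrow> complex poly" where
  "pole_poly D = (\<Prod>z\<in>poles D. [:-z, 1:] ^ order z D)"

definition pole_poly0 :: "complex poly \<Rightarrow> complex poly" where
  "pole_poly0 D = (\<Prod>z\<in>poles D. [:-z, 1:])"

end

theory Submission imports Defs "HOL-Real_Asymp.Real_Asymp" begin

primrec Aseq :: "complex poly \<Rightarrow> complex poly \<Rightarrow> nat \<Rightarrow> complex poly" where
  "Aseq N D 0 = N"
| "Aseq N D (Suc n) = pderiv (Aseq N D n) * D - smult (of_nat (Suc n)) (Aseq N D n * pderiv D)"

lemma deriv_Aseq:
  assumes "poly D z \<noteq> 0"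
  shows "(deriv ^^ n) (rat_fun N D) z = poly (Aseq N D n) z / poly D z ^ Suc n"
  using assms
proof (induction n arbitrary: z)
  case 0
  then show ?case by (simp add: rat_fun_def)
next
  case (Suc n)
  let ?g = "\<lambda>w. poly (Aseq N D n) w / poly D w ^ Suc n"
  have op: "open {w. poly D w \<noteq> 0}"
    by (rule open_Collect_neq) (auto intro: continuous_intros)
  have ev: "eventually (\<lambda>w. (deriv ^^ n) (rat_fun N D) w = ?g w) (nhds z)"
  proof -
    have "\<forall>\<^sub>F w in nhds z. w \<in> {w. poly D w \<noteq> 0}"
      using eventually_nhds_in_open[OF op, of z] Suc.prems by simp
    then show ?thesis
      by (rule eventually_mono) (use Suc.IH in simp)
  qed
  have "(deriv ^^ Suc n) (rat_fun N D) z = deriv ((deriv ^^ n) (rat_fun N D)) z" by simp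
  also have "\<dots> = deriv ?g z" by (rule deriv_cong_ev[OF ev refl])
  also have "\<dots> = (poly (pderiv (Aseq N D n)) z * poly D z ^ Suc n
      - poly (Aseq N D n) z * ((1 + of_nat n) * (poly (pderiv D) z * poly D z ^ n)))
      / (poly D z ^ Suc n * poly D z ^ Suc n)"
  proof (rule DERIV_imp_deriv)
    show "(?g has_field_derivative (poly (pderiv (Aseq N D n)) z * poly D z ^ Suc n
      - poly (Aseq N D n) z * ((1 + of_nat n) * (poly (pderiv D) z * poly D z ^ n)))
      / (poly D z ^ Suc n * poly D z ^ Suc n)) (at z)"
      using Suc.prems by (intro DERIV_divide poly_DERIV DERIV_power_Suc) auto
  qed
  also have "\<dots> = poly (Aseq N D (Suc n)) z / poly D z ^ Suc (Suc n)"
    using Suc.prems by (simp add: field_simps)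
  finally show ?case .
qed

lemma coeff_mult_le:
  fixes p q :: "'a::comm_semiring_1 poly"
  assumes "degree p \<le> i" "degree q \<le> j"
  shows "coeff (p * q) (i + j) = coeff p i * coeff q j"
proof -
  have "coeff (p * q) (i + j) = (\<Sum>k\<le>i+j. coeff p k * coeff q (i + j - k))"
    by (simp add: coeff_mult)
  also have "\<dots> = (\<Sum>k\<in>{i}. coeff p k * coeff q (i + j - k))"
  proof (rule sum.mono_neutral_right)
    show "\<forall>k\<in>{..i + j} - {i}. coeff p k * coeff q (i + j - k) = 0"
    proof
      fix k assume k: "k \<in> {..i + j} - {i}"
      show "coeff p k * coeff q (i + j - k) = 0"
      proof (cases "k < i")
        case True
        then have "coeff q (i + j - k) = 0" using assms by (intro coeff_eq_0) auto
        then show ?thesis by simp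
      next
        case False
        then have "coeff p k = 0" using assms k by (intro coeff_eq_0) auto
        then show ?thesis by simp
      qed
    qed
  qed auto
  finally show ?thesis by simp
qed

lemma Aseq_degree:
  assumes "degree D \<ge> 1"
  shows "degree (Aseq N D (Suc n)) \<le> degree (Aseq N D n) + degree D - 1"
proof -
  let ?A = "Aseq N D n" and ?d = "degree D"
  have 1: "degree (pderiv ?A * D) \<le> degree ?A + ?d - 1"
  proof (cases "degree ?A = 0")
    case True
    then have "pderiv ?A = 0" by (simp add: pderiv_eq_0_iff)
    then show ?thesis by simp
  next
    case False
    have "degree (pderiv ?A * D) \<le> degree (pderiv ?A) + ?d" by (rule degree_mult_le)
    then show ?thesis using False by (simp add: degree_pderiv)
  qed
  have 2: "degree (smult (of_nat (Suc n)) (?A * pderiv D)) \<le> degree ?A + ?d - 1"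
  proof -
    have "degree (smult (of_nat (Suc n)) (?A * pderiv D)) \<le> degree (?A * pderiv D)"
      by (rule degree_smult_le)
    also have "\<dots> \<le> degree ?A + degree (pderiv D)" by (rule degree_mult_le)
    finally show ?thesis using assms by (simp add: degree_pderiv)
  qed
  show ?thesis using degree_diff_le[OF 1 2] by simp
qed

lemma Aseq_coeff:
  assumes "degree D \<ge> 1"
  shows "coeff (Aseq N D (Suc n)) (degree (Aseq N D n) + degree D - 1)
     = lead_coeff (Aseq N D n) * lead_coeff D
       * (of_nat (degree (Aseq N D n)) - of_nat (Suc n) * of_nat (degree D))"
proof -
  let ?A = "Aseq N D n" and ?d = "degree D" and ?a = "degree (Aseq N D n)"
  have 1: "coeff (pderiv ?A * D) (?a + ?d - 1) = of_nat ?a * lead_coeff ?A * lead_coeff D"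
  proof (cases "?a = 0")
    case True
    then have "pderiv ?A = 0" by (simp add: pderiv_eq_0_iff)
    then show ?thesis using True by simp
  next
    case False
    have "coeff (pderiv ?A * D) ((?a - 1) + ?d) = coeff (pderiv ?A) (?a - 1) * coeff D ?d"
      by (rule coeff_mult_le) (auto simp: degree_pderiv)
    moreover have "(?a - 1) + ?d = ?a + ?d - 1" using False by simp
    ultimately show ?thesis using False by (simp add: coeff_pderiv)
  qed
  have 2: "coeff (?A * pderiv D) (?a + ?d - 1) = lead_coeff ?A * (of_nat ?d * lead_coeff D)"
  proof -
    have "coeff (?A * pderiv D) (?a + (?d - 1)) = coeff ?A ?a * coeff (pderiv D) (?d - 1)"
      by (rule coeff_mult_le) (auto simp: degree_pderiv)
    moreover have "?a + (?d - 1) = ?a + ?d - 1" using assms by simp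
    ultimately show ?thesis using assms by (simp add: coeff_pderiv)
  qed
  show ?thesis
    apply (simp only: Aseq.simps coeff_diff coeff_smult 1 2)
    by (simp add: algebra_simps)
qed

lemma Aseq_tail:
  assumes d: "degree D \<ge> 1" and nz: "Aseq N D n0 \<noteq> 0" and D0: "D \<noteq> 0"
    and m0: "degree (Aseq N D n0) + m0 = Suc n0 * degree D" and m0pos: "m0 \<ge> 1"
  shows "degree (Aseq N D (n0 + j)) = degree (Aseq N D n0) + j * (degree D - 1) \<and>
         lead_coeff (Aseq N D (n0 + j)) = lead_coeff (Aseq N D n0) * lead_coeff D ^ j
            * (-1) ^ j * of_nat (pochhammer m0 j)"
proof (induction j)
  case 0
  then show ?case by simp
next
  case (Suc j)
  let ?A = "Aseq N D (n0 + j)" and ?d = "degree D" and ?b = "degree (Aseq N D n0)"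
  let ?a = "degree ?A"
  have ha: "?a = ?b + j * (?d - 1)" by (rule conjunct1[OF Suc.IH])
  have hl: "lead_coeff ?A = lead_coeff (Aseq N D n0) * lead_coeff D ^ j
            * (-1) ^ j * of_nat (pochhammer m0 j)" by (rule conjunct2[OF Suc.IH])
  have nat_id: "?a + (m0 + j) = Suc (n0 + j) * ?d"
  proof -
    obtain d' where "?d = Suc d'" using d by (cases ?d) auto
    then show ?thesis using ha m0 by (simp add: algebra_simps)
  qed
  have cid: "(of_nat ?a - of_nat (Suc (n0 + j)) * of_nat ?d :: complex) = - of_nat (m0 + j)"
  proof -
    have "(of_nat ?a + of_nat (m0 + j) :: complex) = of_nat (Suc (n0 + j)) * of_nat ?d"
      using arg_cong[OF nat_id, of "of_nat :: nat \<Rightarrow> complex"] by (simp only: of_nat_add of_nat_mult)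
    then have "(of_nat ?a - of_nat (Suc (n0 + j)) * of_nat ?d :: complex)
       = of_nat ?a - (of_nat ?a + of_nat (m0 + j))" by simp
    also have "\<dots> = - of_nat (m0 + j)" by simp
    finally show ?thesis .
  qed
  have lA: "lead_coeff (Aseq N D n0) \<noteq> 0" using nz by simp
  have poch: "pochhammer m0 j \<noteq> 0" using pochhammer_pos[of m0 j] m0pos by simp
  have lc: "lead_coeff ?A \<noteq> 0" using hl lA poch D0 by simp
  have cf: "coeff (Aseq N D (Suc (n0 + j))) (?a + ?d - 1) = lead_coeff ?A * lead_coeff D * (- of_nat (m0 + j))"
    using Aseq_coeff[OF d, of N "n0 + j"] cid by simp
  have cfnz: "coeff (Aseq N D (Suc (n0 + j))) (?a + ?d - 1) \<noteq> 0"
  proof -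
    have "m0 + j \<noteq> 0" using m0pos by simp
    then have nz3: "(- of_nat (m0 + j) :: complex) \<noteq> 0"
      by (simp only: neg_equal_0_iff_equal of_nat_eq_0_iff) simp
    have "lead_coeff D \<noteq> 0" using D0 by simp
    then show ?thesis unfolding cf using lc nz3 by (metis mult_eq_0_iff)
  qed
  have deg: "degree (Aseq N D (Suc (n0 + j))) = ?a + ?d - 1"
    using le_degree[OF cfnz] Aseq_degree[OF d, of N "n0 + j"] by simp
  have deg': "degree (Aseq N D (n0 + Suc j)) = ?b + Suc j * (?d - 1)"
    using deg ha d by simp
  have "lead_coeff (Aseq N D (n0 + Suc j)) = lead_coeff ?A * lead_coeff D * (- of_nat (m0 + j))"
    using deg cf by simp
  also have "\<dots> = lead_coeff (Aseq N D n0) * lead_coeff D ^ Suc j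
            * (-1) ^ Suc j * of_nat (pochhammer m0 (Suc j))"
    unfolding hl by (simp add: pochhammer_Suc algebra_simps)
  finally show ?case using deg' by simp
qed

lemma poly_eq_on_infinite:
  fixes p q :: "complex poly"
  assumes "infinite S" "\<And>z. z \<in> S \<Longrightarrow> poly p z = poly q z"
  shows "p = q"
proof (rule ccontr)
  assume "p \<noteq> q"
  then have "p - q \<noteq> 0" by simp
  then have "finite {z. poly (p - q) z = 0}" by (rule poly_roots_finite)
  moreover have "S \<subseteq> {z. poly (p - q) z = 0}" using assms(2) by auto
  ultimately show False using assms(1) finite_subset by blast
qed

lemma infinite_nonroots:
  fixes D :: "complex poly"
  assumes "D \<noteq> 0"
  shows "infinite {z. poly D z \<noteq> 0}"
proof -
  have "{z. poly D z \<noteq> 0} = UNIV - {z. poly D z = 0}" by auto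
  moreover have "finite {z. poly D z = 0}" using assms by (rule poly_roots_finite)
  moreover have "infinite (UNIV :: complex set)" by (rule infinite_UNIV_char_0)
  ultimately show ?thesis using Diff_infinite_finite by metis
qed

lemma pole_poly_nz: "z \<notin> poles D \<Longrightarrow> poly (pole_poly D) z \<noteq> 0"
  unfolding pole_poly_def by (cases "finite (poles D)") (auto simp: poly_prod prod_zero_iff)

lemma pole_poly0_nz: "z \<notin> poles D \<Longrightarrow> poly (pole_poly0 D) z \<noteq> 0"
  unfolding pole_poly0_def by (cases "finite (poles D)") (auto simp: poly_prod prod_zero_iff)

lemma pole_poly_lc: "lead_coeff (pole_poly D) = 1"
  unfolding pole_poly_def by (simp add: lead_coeff_prod lead_coeff_power)

lemma pole_poly0_lc: "lead_coeff (pole_poly0 D) = 1"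
  unfolding pole_poly0_def by (simp add: lead_coeff_prod)

lemma alpha_eq:
  fixes D A R :: "complex poly" and a :: complex
  assumes D0: "D \<noteq> 0" and R1: "lead_coeff R = 1"
    and eq: "\<And>z. z \<notin> poles D \<Longrightarrow> poly A z / poly D z ^ Suc n
          = a * poly R z / (poly (pole_poly D) z * poly (pole_poly0 D) z ^ n)"
  shows "a * lead_coeff D ^ Suc n = lead_coeff A"
proof -
  have "smult a R * D ^ Suc n = A * pole_poly D * pole_poly0 D ^ n"
  proof (rule poly_eq_on_infinite[OF infinite_nonroots[OF D0]])
    fix z assume "z \<in> {z. poly D z \<noteq> 0}"
    then have z: "z \<notin> poles D" "poly D z \<noteq> 0" by (auto simp: poles_def)
    have 1: "poly (pole_poly D) z \<noteq> 0" "poly (pole_poly0 D) z \<noteq> 0"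
      using z by (simp_all add: pole_poly_nz pole_poly0_nz)
    from eq[OF z(1)] z(2) 1 show "poly (smult a R * D ^ Suc n) z = poly (A * pole_poly D * pole_poly0 D ^ n) z"
      by (simp add: field_simps)
  qed
  then have "lead_coeff (smult a R * D ^ Suc n) = lead_coeff (A * pole_poly D * pole_poly0 D ^ n)"
    by simp
  then show ?thesis
    by (simp only: lead_coeff_mult lead_coeff_power lead_coeff_smult pole_poly_lc pole_poly0_lc R1) simp
qed

lemma fact_add_le: "fact (a + j) \<le> (a + j) ^ a * (fact j :: nat)"
proof (induction a)
  case 0 then show ?case by simp
next
  case (Suc a)
  have "fact (Suc a + j) = (Suc a + j) * fact (a + j)" by simp
  also have "\<dots> \<le> (Suc a + j) * ((a + j) ^ a * fact j)" using Suc.IH by (intro mult_left_mono) auto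
  also have "\<dots> \<le> (Suc a + j) * ((Suc a + j) ^ a * fact j)"
    by (intro mult_left_mono mult_right_mono power_mono) auto
  finally show ?case by (simp only: power_Suc mult.assoc)
qed

lemma poch_bounds:
  assumes "m0 \<ge> 1"
  shows "fact j \<le> pochhammer m0 j \<and> pochhammer m0 j \<le> (fact (m0 + j) :: nat)"
proof (induction j)
  case 0 then show ?case by simp
next
  case (Suc j)
  have "fact (Suc j) = Suc j * fact j" by simp
  also have "\<dots> \<le> (m0 + j) * pochhammer m0 j"
    using Suc.IH assms by (intro mult_mono) auto
  also have "\<dots> = pochhammer m0 (Suc j)" by (simp add: pochhammer_Suc)
  finally have 1: "fact (Suc j) \<le> pochhammer m0 (Suc j)" .
  have "pochhammer m0 (Suc j) = (m0 + j) * pochhammer m0 j" by (simp add: pochhammer_Suc)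
  also have "\<dots> \<le> Suc (m0 + j) * fact (m0 + j)"
    using Suc.IH by (intro mult_mono) auto
  also have "\<dots> = fact (m0 + Suc j)" by simp
  finally show ?case using 1 by simp
qed

lemma asym:
  fixes K :: real and m0 n0 :: nat
  assumes K: "K > 0" and m0: "m0 \<ge> 1"
  shows "(\<lambda>j. ln (fact (j + n0) / (K * real (pochhammer m0 j))) / real (j + n0)) \<longlonglongrightarrow> 0"
proof (rule tendsto_sandwich)
  let ?f = "\<lambda>j. ln (fact (j + n0) / (K * real (pochhammer m0 j))) / real (j + n0)"
  show "(\<lambda>j. (- real m0 * ln (real (m0 + j)) - ln K) / real (j + n0)) \<longlonglongrightarrow> 0"
    by real_asymp
  show "(\<lambda>j. (real n0 * ln (real (n0 + j)) - ln K) / real (j + n0)) \<longlonglongrightarrow> 0"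
    by real_asymp
  have bnd: "(- real m0 * ln (real (m0 + j)) - ln K) / real (j + n0) \<le> ?f j \<and>
     ?f j \<le> (real n0 * ln (real (n0 + j)) - ln K) / real (j + n0)" if j: "j \<ge> 1" for j
  proof -
    have pb: "fact j \<le> pochhammer m0 j" "pochhammer m0 j \<le> (fact (m0 + j) :: nat)"
      using poch_bounds[OF m0, of j] by auto
    have f1: "fact (m0 + j) \<le> (m0 + j) ^ m0 * (fact j :: nat)" by (rule fact_add_le)
    have f2: "fact (n0 + j) \<le> (n0 + j) ^ n0 * (fact j :: nat)" by (rule fact_add_le)
    have f3: "fact j \<le> (fact (j + n0) :: nat)" by (rule fact_mono) simp
    define F where "F = real (fact (j + n0))"
    define Pc where "Pc = real (pochhammer m0 j)"
    define Fj where "Fj = real (fact j :: nat)"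
    have Fj: "Fj > 0" unfolding Fj_def by simp
    have Pc: "Pc \<ge> Fj" "Pc \<le> real (m0 + j) ^ m0 * Fj" unfolding Pc_def Fj_def
      using pb f1 by (simp_all only: of_nat_le_iff of_nat_mult of_nat_power [symmetric]) 
        (metis of_nat_le_iff order_trans of_nat_mult of_nat_power)
    have "real (fact (j + n0)) \<le> real ((n0 + j) ^ n0 * fact j)"
      using f2 by (simp only: of_nat_le_iff add.commute)
    then have Fb2: "F \<le> real (n0 + j) ^ n0 * Fj" unfolding F_def Fj_def
      by (simp only: of_nat_mult of_nat_power)
    have Fb: "F \<ge> Fj" "F \<le> real (n0 + j) ^ n0 * Fj" using Fb2 f3 unfolding F_def Fj_def
      by (simp_all only: of_nat_le_iff)
    have Pcpos: "Pc > 0" using Pc Fj by linarith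
    have Fpos: "F > 0" using Fb Fj by linarith
    have mj: "real (m0 + j) \<ge> 1" using j by simp
    have nj: "real (n0 + j) \<ge> 1" using j by simp
    have eq: "ln (fact (j + n0) / (K * real (pochhammer m0 j))) = ln (F / Pc) - ln K"
    proof -
      have "fact (j + n0) = F" unfolding F_def by simp
      moreover have "real (pochhammer m0 j) = Pc" unfolding Pc_def by simp
      ultimately show ?thesis using K Pcpos Fpos by (simp add: ln_div ln_mult)
    qed
    have lo: "F / Pc \<ge> 1 / real (m0 + j) ^ m0"
    proof -
      have "1 / real (m0 + j) ^ m0 = Fj / (real (m0 + j) ^ m0 * Fj)" using Fj by simp
      also have "\<dots> \<le> F / (real (m0 + j) ^ m0 * Fj)"
        using Fb Fj mj by (intro divide_right_mono) auto
      also have "\<dots> \<le> F / Pc"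
        using Pc Pcpos Fpos by (intro divide_left_mono) auto
      finally show ?thesis .
    qed
    have hi: "F / Pc \<le> real (n0 + j) ^ n0"
    proof -
      have "F / Pc \<le> F / Fj" using Pc Fj Fpos by (intro divide_left_mono) auto
      also have "\<dots> \<le> real (n0 + j) ^ n0" using Fb Fj by (simp add: divide_le_eq)
      finally show ?thesis .
    qed
    have lnlo: "ln (F / Pc) \<ge> - real m0 * ln (real (m0 + j))"
    proof -
      have "ln (1 / real (m0 + j) ^ m0) \<le> ln (F / Pc)"
        using lo mj Fpos Pcpos by (subst ln_le_cancel_iff) auto
      moreover have "ln (1 / real (m0 + j) ^ m0) = - real m0 * ln (real (m0 + j))"
        using mj by (simp add: ln_div ln_realpow)
      ultimately show ?thesis by simp
    qed
    have lnhi: "ln (F / Pc) \<le> real n0 * ln (real (n0 + j))"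
    proof -
      have "ln (F / Pc) \<le> ln (real (n0 + j) ^ n0)"
        using hi nj Fpos Pcpos by (subst ln_le_cancel_iff) auto
      moreover have "ln (real (n0 + j) ^ n0) = real n0 * ln (real (n0 + j))"
        using nj by (simp add: ln_realpow)
      ultimately show ?thesis by simp
    qed
    have pos: "real (j + n0) > 0" using j by simp
    show ?thesis unfolding eq using lnlo lnhi pos
      by (auto intro!: divide_right_mono)
  qed
  show "\<forall>\<^sub>F j in sequentially. (- real m0 * ln (real (m0 + j)) - ln K) / real (j + n0) \<le> ?f j"
    using eventually_ge_at_top[of 1] by eventually_elim (use bnd in blast)
  show "\<forall>\<^sub>F j in sequentially. ?f j \<le> (real n0 * ln (real (n0 + j)) - ln K) / real (j + n0)"
    using eventually_ge_at_top[of 1] by eventually_elim (use bnd in blast)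
qed

theorem lemma4p3:
  fixes N D :: "complex poly" and \<alpha> :: "nat \<Rightarrow> complex" and R :: "nat \<Rightarrow> complex poly"
  assumes "D \<noteq> 0" and "coprime N D" and "poles D \<noteq> {}"
    and "\<And>n. n \<ge> 1 \<Longrightarrow> lead_coeff (R n) = 1"
    and "\<And>n z. n \<ge> 1 \<Longrightarrow> z \<notin> poles D \<Longrightarrow>
           (deriv ^^ n) (rat_fun N D) z
             = \<alpha> n * poly (R n) z / (poly (pole_poly D) z * poly (pole_poly0 D) z ^ n)"
  shows "(\<lambda>n. ln (norm (fact n / \<alpha> n)) / real n) \<longlonglongrightarrow> 0"
proof -
  let ?A = "Aseq N D"
  have D0: "D \<noteq> 0" by fact
  have d: "degree D \<ge> 1"
  proof (rule ccontr)
    assume "\<not> degree D \<ge> 1"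
    then have "degree D = 0" by simp
    then have D1: "[:coeff D 0:] = D" by (rule degree_0_id)
    obtain z where z: "poly D z = 0" using assms(3) unfolding poles_def by auto
    have "poly [:coeff D 0:] z = 0" using z D1 by simp
    then have "coeff D 0 = 0" by simp
    then show False using D0 D1 by simp
  qed
  have lD: "lead_coeff D \<noteq> 0" using D0 by simp
  have alpha: "\<alpha> n * lead_coeff D ^ Suc n = lead_coeff (?A n)" if n: "n \<ge> 1" for n
  proof (rule alpha_eq[OF D0 assms(4)[OF n]])
    fix z assume z: "z \<notin> poles D"
    then have "poly D z \<noteq> 0" by (simp add: poles_def)
    then show "poly (?A n) z / poly D z ^ Suc n
          = \<alpha> n * poly (R n) z / (poly (pole_poly D) z * poly (pole_poly0 D) z ^ n)"
      using deriv_Aseq[of D z n N] assms(5)[OF n z] by simp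
  qed
  show ?thesis
  proof (cases "\<exists>n. ?A n = 0")
    case True
    then obtain n1 where n1: "?A n1 = 0" by blast
    have z: "?A (n1 + k) = 0" for k
      by (induction k) (use n1 in simp_all)
    have "\<forall>\<^sub>F m in sequentially. ln (norm (fact m / \<alpha> m)) / real m = 0"
      using eventually_ge_at_top[of "n1 + 1"]
    proof eventually_elim
      case (elim m)
      then have "m = n1 + (m - n1)" "m \<ge> 1" by auto
      then have "?A m = 0" using z by metis
      then have "\<alpha> m = 0" using alpha[OF \<open>m \<ge> 1\<close>] lD by simp
      then show ?case by simp
    qed
    then show ?thesis by (rule tendsto_eventually)
  next
    case False
    then have nz: "?A n \<noteq> 0" for n by blast
    have degb: "degree (?A n) + n \<le> degree (?A 0) + n * degree D" for n
    proof (induction n)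
      case 0 then show ?case by simp
    next
      case (Suc n)
      then show ?case using Aseq_degree[OF d, of N n] d by simp
    qed
    define n0 where "n0 = degree (?A 0) + 1"
    have n0: "n0 \<ge> 1" unfolding n0_def by simp
    have lt: "degree (?A n0) < Suc n0 * degree D"
      using degb[of n0] d unfolding n0_def by (simp add: algebra_simps)
    define m0 where "m0 = Suc n0 * degree D - degree (?A n0)"
    have m0: "degree (?A n0) + m0 = Suc n0 * degree D" "m0 \<ge> 1"
      using lt unfolding m0_def by auto
    define K where "K = norm (lead_coeff (?A n0)) / norm (lead_coeff D) ^ Suc n0"
    have K: "K > 0" unfolding K_def using nz lD by simp
    have lim: "(\<lambda>j. ln (fact (j + n0) / (K * real (pochhammer m0 j))) / real (j + n0)) \<longlonglongrightarrow> 0"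
      by (rule asym[OF K m0(2)])
    have feq: "ln (norm (fact (j + n0) / \<alpha> (j + n0))) / real (j + n0)
        = ln (fact (j + n0) / (K * real (pochhammer m0 j))) / real (j + n0)" for j
    proof -
      have lc: "lead_coeff (?A (n0 + j)) = lead_coeff (?A n0) * lead_coeff D ^ j
            * (-1) ^ j * of_nat (pochhammer m0 j)"
        using Aseq_tail[OF d nz D0 m0] by blast
      have "\<alpha> (j + n0) * lead_coeff D ^ Suc (j + n0) = lead_coeff (?A (n0 + j))"
        using alpha[of "j + n0"] n0 by (simp add: add.commute)
      then have E: "\<alpha> (j + n0) * lead_coeff D ^ Suc (j + n0) = lead_coeff (?A n0) * lead_coeff D ^ j
            * (-1) ^ j * of_nat (pochhammer m0 j)" using lc by simp
      have E2: "norm (\<alpha> (j + n0)) * (norm (lead_coeff D) ^ j * norm (lead_coeff D) ^ Suc n0)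
          = norm (lead_coeff (?A n0)) * norm (lead_coeff D) ^ j * real (pochhammer m0 j)"
        using arg_cong[OF E, of norm]
        by (simp only: norm_mult norm_power norm_of_nat norm_minus_cancel norm_one power_one
             mult_1_right power_add[symmetric] add_Suc_right)
      have c: "norm (lead_coeff D) ^ j \<noteq> 0" "norm (lead_coeff D) ^ Suc n0 \<noteq> 0" using lD by auto
      have "norm (\<alpha> (j + n0)) = K * real (pochhammer m0 j)"
        unfolding K_def using E2 c by (simp add: field_simps)
      then show ?thesis by (simp add: norm_divide)
    qed
    have eqf: "(\<lambda>j. ln (norm (fact (j + n0) / \<alpha> (j + n0))) / real (j + n0))
        = (\<lambda>j. ln (fact (j + n0) / (K * real (pochhammer m0 j))) / real (j + n0))"
      by (rule ext) (rule feq)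
    have "(\<lambda>j. ln (norm (fact (j + n0) / \<alpha> (j + n0))) / real (j + n0)) \<longlonglongrightarrow> 0"
      unfolding eqf by (rule lim)
    then show ?thesis by (rule LIMSEQ_offset)
  qed
qed

end
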